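(* Let $x_1,\dots,x_N\in\mathbb{R}^d$ with binary labels $y_1,\dots,y_N\in\{0,1\}$, and suppose $N^+:=\sum_i y_i\ge 1$ and $N^-:=\sum_i(1-y_i)\ge 1$. For $\beta\in\mathbb{R}^d$ let $p_\beta(x)=[1+\exp(-\beta^\top x)]^{-1}$ and define the log-loss $$\ell(\beta)=-\sum_{i=1}^N\Big(y_i\ln p_\beta(x_i)+(1-y_i)\ln\big(1-p_\beta(x_i)\big)\Big).$$ Suppose $\beta\in\arg\min_{\beta'\in\mathbb{R}^d}\ell(\beta')$ (a minimizer exists), and let $c=\max_i|\beta^\top x_i|$. Let $\mu^+=\frac{1}{N^+}\sum_{i:y_i=1}x_i$ and $\mu^-=\frac{1}{N^-}\sum_{i:y_i=0}x_i$. Then $$C_1-\big(C_3\,\beta^\top\mu^+-C_4\,\beta^\top\mu^-\big)\;\le\;\ell(\beta)\;\le\; C_2-\big(C_3\,\beta^\top\mu^+-C_4\,\beta^\top\mu^-\big),$$ where $C_1=N\ln 2$, $C_2=N\ln(1+e^{c})-\frac{Nc}{2}$, $C_3=\frac{N^+}{2}$, $C_4=\frac{N^-}{2}$. *)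

theory Defs
  imports "HOL-Analysis.Analysis"
begin

definition sigmoid_prob :: "real ^ 'd \<Rightarrow> real ^ 'd \<Rightarrow> real" where
  "sigmoid_prob \<beta> x = 1 / (1 + exp (- (\<beta> \<bullet> x)))"

definition log_loss :: "nat \<Rightarrow> (nat \<Rightarrow> real ^ 'd) \<Rightarrow> (nat \<Rightarrow> real) \<Rightarrow> real ^ 'd \<Rightarrow> real" where
  "log_loss N x y \<beta> = - (\<Sum>i<N. y i * ln (sigmoid_prob \<beta> (x i))
                                 + (1 - y i) * ln (1 - sigmoid_prob \<beta> (x i)))"

end

theory Submission
  imports Defs
begin

definition ff :: "real \<Rightarrow> real" where "ff t = ln 2 + ln (cosh (t/2))"

lemma one_plus_exp: "1 + exp (t::real) = exp (t/2) * (2 * cosh (t/2))"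
proof -
  have "exp (t/2) * exp (t/2) = exp t" by (simp add: exp_add[symmetric])
  moreover have "exp (t/2) * exp (-(t/2)) = 1" by (simp add: exp_add[symmetric])
  ultimately show ?thesis by (simp add: cosh_def algebra_simps)
qed

lemma ln_one_plus_exp: "ln (1 + exp (t::real)) = t/2 + ff t"
proof -
  have "ln (1 + exp t) = ln (exp (t/2)) + ln (2 * cosh (t/2))"
    using ln_mult[of "exp (t/2)" "2 * cosh (t/2)"] one_plus_exp[of t] by simp
  also have "\<dots> = t/2 + ff t" by (simp add: ff_def ln_mult)
  finally show ?thesis .
qed

lemma loss_term:
  assumes "y \<in> {0,1::real}"
  shows "- (y * ln (sigmoid_prob b z) + (1 - y) * ln (1 - sigmoid_prob b z))
     = ff (b \<bullet> z) - y * (b \<bullet> z) / 2 + (1 - y) * (b \<bullet> z) / 2"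
proof -
  define t where "t = b \<bullet> z"
  have e1: "ln (sigmoid_prob b z) = - ln (1 + exp (-t))"
    by (simp add: sigmoid_prob_def t_def ln_div add_pos_pos)
  have "1 - sigmoid_prob b z = 1 / (1 + exp t)"
  proof -
    have p: "1 + exp (-t) > 0" "1 + exp t > 0" by (auto intro: add_pos_pos)
    have "exp (-t) * exp t = 1" by (simp add: exp_add[symmetric])
    then show ?thesis using p unfolding sigmoid_prob_def t_def[symmetric]
      by (simp add: field_simps)
  qed
  hence e2: "ln (1 - sigmoid_prob b z) = - ln (1 + exp t)"
    by (simp add: ln_div add_pos_pos)
  have fm: "ff (-t) = ff t" by (simp add: ff_def)
  show ?thesis using assms
    by (auto simp: e1 e2 ln_one_plus_exp fm t_def[symmetric])
qed

lemma ff_lower: "ff t \<ge> ln 2"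
  using cosh_real_ge_1[of "t/2"] by (simp add: ff_def)

lemma ff_upper: "\<bar>t\<bar> \<le> c \<Longrightarrow> ff t \<le> ff c"
proof -
  assume a: "\<bar>t\<bar> \<le> c"
  have "cosh (\<bar>t/2\<bar>) \<le> cosh (c/2)"
    using a by (subst cosh_real_nonneg_le_iff) auto
  hence "cosh (t/2) \<le> cosh (c/2)" by (metis cosh_real_abs)
  thus ?thesis by (simp add: ff_def)
qed

theorem theorem2:
  fixes N :: nat and x :: "nat \<Rightarrow> real ^ 'd" and y :: "nat \<Rightarrow> real" and \<beta> :: "real ^ 'd"
  assumes labels: "\<forall>i<N. y i \<in> {0, 1}"
    and pos: "(\<Sum>i<N. y i) \<ge> 1"
    and neg: "(\<Sum>i<N. 1 - y i) \<ge> 1"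
    and argmin: "\<forall>\<beta>'. log_loss N x y \<beta> \<le> log_loss N x y \<beta>'"
  defines "Np \<equiv> (\<Sum>i<N. y i)"
    and "Nn \<equiv> (\<Sum>i<N. 1 - y i)"
    and "c \<equiv> Max ((\<lambda>i. \<bar>\<beta> \<bullet> x i\<bar>) ` {..<N})"
    and "\<mu>p \<equiv> ((1 / (\<Sum>i<N. y i)) *\<^sub>R (\<Sum>i\<in>{i. i < N \<and> y i = 1}. x i))"
    and "\<mu>n \<equiv> ((1 / (\<Sum>i<N. 1 - y i)) *\<^sub>R (\<Sum>i\<in>{i. i < N \<and> y i = 0}. x i))"
  shows "real N * ln 2 - (Np / 2 * (\<beta> \<bullet> \<mu>p) - Nn / 2 * (\<beta> \<bullet> \<mu>n))
           \<le> log_loss N x y \<beta>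
         \<and> log_loss N x y \<beta>
           \<le> real N * ln (1 + exp c) - real N * c / 2 - (Np / 2 * (\<beta> \<bullet> \<mu>p) - Nn / 2 * (\<beta> \<bullet> \<mu>n))"
proof -
  define t where "t i = \<beta> \<bullet> x i" for i
  define L where "L = (\<Sum>i<N. y i * t i) / 2 - (\<Sum>i<N. (1 - y i) * t i) / 2"
  have loss: "log_loss N x y \<beta> = (\<Sum>i<N. ff (t i)) - L"
  proof -
    have "log_loss N x y \<beta> = (\<Sum>i<N. - (y i * ln (sigmoid_prob \<beta> (x i))
                                 + (1 - y i) * ln (1 - sigmoid_prob \<beta> (x i))))"
      unfolding log_loss_def by (rule sum_negf[symmetric])
    also have "\<dots> = (\<Sum>i<N. ff (t i) - y i * t i / 2 + (1 - y i) * t i / 2)"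
      by (rule sum.cong) (use labels loss_term in \<open>auto simp: t_def\<close>)
    also have "\<dots> = (\<Sum>i<N. ff (t i)) - L"
      by (simp add: L_def sum.distrib sum_subtractf sum_divide_distrib)
    finally show ?thesis .
  qed
  have Np1: "Np \<ge> 1" and Nn1: "Nn \<ge> 1" using pos neg by (auto simp: Np_def Nn_def)
  have sp: "(\<Sum>i\<in>{i. i < N \<and> y i = 1}. t i) = (\<Sum>i<N. y i * t i)"
  proof -
    have "(\<Sum>i<N. y i * t i) = (\<Sum>i\<in>{i. i < N \<and> y i = 1}. y i * t i)"
      by (rule sum.mono_neutral_right) (use labels in auto)
    also have "\<dots> = (\<Sum>i\<in>{i. i < N \<and> y i = 1}. t i)" by (rule sum.cong) auto
    finally show ?thesis by simp
  qed
  have sn: "(\<Sum>i\<in>{i. i < N \<and> y i = 0}. t i) = (\<Sum>i<N. (1 - y i) * t i)"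
  proof -
    have "(\<Sum>i<N. (1 - y i) * t i) = (\<Sum>i\<in>{i. i < N \<and> y i = 0}. (1 - y i) * t i)"
      by (rule sum.mono_neutral_right) (use labels in auto)
    also have "\<dots> = (\<Sum>i\<in>{i. i < N \<and> y i = 0}. t i)" by (rule sum.cong) auto
    finally show ?thesis by simp
  qed
  have mp: "Np / 2 * (\<beta> \<bullet> \<mu>p) = (\<Sum>i<N. y i * t i) / 2"
    using Np1 unfolding \<mu>p_def Np_def[symmetric]
    using sp unfolding t_def by (simp add: inner_sum_right)
  have mn: "Nn / 2 * (\<beta> \<bullet> \<mu>n) = (\<Sum>i<N. (1 - y i) * t i) / 2"
    using Nn1 unfolding \<mu>n_def Nn_def[symmetric]
    using sn unfolding t_def by (simp add: inner_sum_right)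
  have Lm: "Np / 2 * (\<beta> \<bullet> \<mu>p) - Nn / 2 * (\<beta> \<bullet> \<mu>n) = L"
    using mp mn L_def by simp
  have lower: "real N * ln 2 \<le> (\<Sum>i<N. ff (t i))"
    using sum_mono[of "{..<N}" "\<lambda>_. ln 2" "\<lambda>i. ff (t i)"] ff_lower by simp
  have tc: "\<bar>t i\<bar> \<le> c" if "i < N" for i
    unfolding c_def t_def by (rule Max_ge) (use that in auto)
  have upper: "(\<Sum>i<N. ff (t i)) \<le> real N * ff c"
    using sum_mono[of "{..<N}" "\<lambda>i. ff (t i)" "\<lambda>_. ff c"] ff_upper tc by simp
  have ffc: "ff c = ln (1 + exp c) - c/2" using ln_one_plus_exp[of c] by simp
  show ?thesis
    unfolding loss Lm using lower upper ffc by (simp add: algebra_simps)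
qed

end
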